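(* Let $D$ be an odd prime. For any $\varepsilon>0$ there exist $c,\rho>0$ such that the following holds. Let $n=H+2L$ with $H\le \rho n$, let $\delta$ be a random $2n\times 2n$ boundary operator (as defined in the context) with these parameters, and consider $\ker\delta\subseteq \mathbb{Z}_D^{2n}$. Then the probability that $\ker\delta$ contains a nonzero vector of weight less than $cn$ is $O(D^{(-1/2+\varepsilon)n})$ as $n\to\infty$.
   Context: $\mathbb{Z}_D$ is the field with $D$ elements. Let $\delta_0$ be the $n\times n$ matrix over $\mathbb{Z}_D$ which, in block form with row and column block sizes $H,L,L$ (in this order), has the identity $I_L$ in block position (2,3) and zero blocks elsewhere. A random $2n\times 2n$ boundary operator on $C=C_+\oplus C_-$, $C_\pm=\mathbb{Z}_D^n$, is $\delta=\begin{bmatrix}U_+&0\\0&U_-\end{bmatrix}\begin{bmatrix}0&\delta_0\\ \delta_0&0\end{bmatrix}\begin{bmatrix}U_+^{-1}&0\\0&U_-^{-1}\end{bmatrix}$, where $U_+,U_-$ are independent and uniformly distributed in $\mathrm{GL}(n,\mathbb{Z}_D)$. The weight of a vector is the number of its nonzero coordinates in the standard basis. *)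

theory Defs
  imports "Jordan_Normal_Form.Matrix_Kernel" "Berlekamp_Zassenhaus.Finite_Field"
begin

(* Z_D is the type 'p mod_ring with D = CARD('p) prime (class prime_card). *)

definition GL :: "nat \<Rightarrow> 'a::prime_card mod_ring mat set" where
  "GL n = {U \<in> carrier_mat n n. invertible_mat U}"

definition minv :: "'a::field mat \<Rightarrow> 'a mat" where
  "minv U = (SOME V. V \<in> carrier_mat (dim_row U) (dim_row U) \<and>
                     U * V = 1\<^sub>m (dim_row U) \<and> V * U = 1\<^sub>m (dim_row U))"

(* n x n matrix, n = H+2L, block sizes H,L,L: identity I_L in block (2,3) *)
definition delta0 :: "nat \<Rightarrow> nat \<Rightarrow> 'a::field mat" where
  "delta0 H L = mat (H + 2*L) (H + 2*L)
     (\<lambda>(i,j). if H \<le> i \<and> i < H + L \<and> j = i + L then 1 else 0)"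

definition boundary_op :: "nat \<Rightarrow> nat \<Rightarrow> 'a::field mat \<Rightarrow> 'a mat \<Rightarrow> 'a mat" where
  "boundary_op H L Up Um =
     (let n = H + 2*L in
      four_block_mat Up (0\<^sub>m n n) (0\<^sub>m n n) Um
      * four_block_mat (0\<^sub>m n n) (delta0 H L) (delta0 H L) (0\<^sub>m n n)
      * four_block_mat (minv Up) (0\<^sub>m n n) (0\<^sub>m n n) (minv Um))"

definition weight :: "'a::zero vec \<Rightarrow> nat" where
  "weight v = card {i. i < dim_vec v \<and> v $ i \<noteq> 0}"

definition bad_prob :: "'p::prime_card itself \<Rightarrow> nat \<Rightarrow> nat \<Rightarrow> real \<Rightarrow> real" where
  "bad_prob _ H L c =
     (let n = H + 2*L in
      real (card {(Up, Um). Up \<in> (GL n :: 'p mod_ring mat set) \<and> Um \<in> GL n \<and>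
         (\<exists>v \<in> mat_kernel (boundary_op H L Up Um).
             v \<noteq> 0\<^sub>v (2*n) \<and> real (weight v) < c * real n)})
      / real (card (GL n :: 'p mod_ring mat set)) ^ 2)"

end

theory Submission
  imports Defs "HOL-Real_Asymp.Real_Asymp"
begin

lemma minv_props:
  fixes U :: "'a::field mat"
  assumes U: "U \<in> carrier_mat n n" and inv: "invertible_mat U"
  shows "minv U \<in> carrier_mat n n \<and> U * minv U = 1\<^sub>m n \<and> minv U * U = 1\<^sub>m n"
proof -
  from inv obtain B where B1: "U * B = 1\<^sub>m n" and B2: "B * U = 1\<^sub>m (dim_row B)"
    unfolding invertible_mat_def inverts_mat_def using U by auto
  have "dim_col B = n" using arg_cong[OF B1, of dim_col] by simp
  moreover have "dim_row B = n" using arg_cong[OF B2, of dim_col] U by simp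
  ultimately have Bc: "B \<in> carrier_mat n n" by auto
  have ex: "\<exists>V. V \<in> carrier_mat (dim_row U) (dim_row U) \<and> U * V = 1\<^sub>m (dim_row U) \<and> V * U = 1\<^sub>m (dim_row U)"
    using Bc B1 B2 U by (intro exI[of _ B]) auto
  show ?thesis using someI_ex[OF ex] U unfolding minv_def by auto
qed

lemma zero_mult_vec[simp]: "v \<in> carrier_vec m \<Longrightarrow> (0\<^sub>m n m :: 'a::field mat) *\<^sub>v v = 0\<^sub>v n"
  by (intro eq_vecI) (auto simp: scalar_prod_def)

lemma mult_zero_vec[simp]: "A \<in> carrier_mat n m \<Longrightarrow> (A :: 'a::field mat) *\<^sub>v 0\<^sub>v m = 0\<^sub>v n"
  by (intro eq_vecI) (auto simp: scalar_prod_def)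

lemma zero_append: "(0\<^sub>v (n+m) :: 'a::zero vec) = 0\<^sub>v n @\<^sub>v 0\<^sub>v m"
  by (intro eq_vecI) auto

lemma minv_GL:
  fixes U :: "'p::prime_card mod_ring mat"
  assumes "U \<in> GL n"
  shows "minv U \<in> GL n" "minv (minv U) = U"
proof -
  have U: "U \<in> carrier_mat n n" "invertible_mat U" using assms unfolding GL_def by auto
  note m = minv_props[OF U]
  have inv: "invertible_mat (minv U)" unfolding invertible_mat_def inverts_mat_def square_mat.simps
    using m U by (intro conjI exI[of _ U]) auto
  then show "minv U \<in> GL n" using m unfolding GL_def by auto
  note m2 = minv_props[OF _ inv, of n]
  have a: "(U * minv U) * minv (minv U) = U * (minv U * minv (minv U))"
    using m2 m U by (intro assoc_mult_mat[of _ n n _ n _ n]) auto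
  have "dim_row (minv (minv U)) = n" using m2 m by auto
  then have "(U * minv U) * minv (minv U) = minv (minv U)" using m2 m by simp
  moreover have "U * (minv U * minv (minv U)) = U" using m2 m U by simp
  ultimately show "minv (minv U) = U" using a by simp
qed

lemma inv_cancel_vec:
  fixes U :: "'a::field mat"
  assumes U: "U \<in> carrier_mat n n" "invertible_mat U" and w: "w \<in> carrier_vec n"
    and z: "U *\<^sub>v w = 0\<^sub>v n"
  shows "w = 0\<^sub>v n"
proof -
  note m = minv_props[OF U]
  have "minv U *\<^sub>v (U *\<^sub>v w) = (minv U * U) *\<^sub>v w"
    using m U w by (intro assoc_mult_mat_vec[symmetric, of _ n n _ n]) auto
  also have "\<dots> = w" using m w by simp
  finally have "w = minv U *\<^sub>v (U *\<^sub>v w)" by simp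
  also have "\<dots> = 0\<^sub>v n" using z m by simp
  finally show ?thesis .
qed

lemma delta0_carrier[simp]: "delta0 H L \<in> carrier_mat (H+2*L) (H+2*L)"
  unfolding delta0_def by auto

lemma kernel_split:
  fixes Up Um :: "'a::field mat"
  assumes n: "n = H + 2*L"
    and Up: "Up \<in> carrier_mat n n" "invertible_mat Up"
    and Um: "Um \<in> carrier_mat n n" "invertible_mat Um"
    and v: "v \<in> mat_kernel (boundary_op H L Up Um)"
  shows "v \<in> carrier_vec (n+n)"
    "delta0 H L *\<^sub>v (minv Up *\<^sub>v vec_first v n) = 0\<^sub>v n"
    "delta0 H L *\<^sub>v (minv Um *\<^sub>v vec_last v n) = 0\<^sub>v n"
proof -
  note mp = minv_props[OF Up] and mm = minv_props[OF Um]
  have d0: "delta0 H L \<in> carrier_mat n n" using n by simp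
  let ?P = "four_block_mat Up (0\<^sub>m n n) (0\<^sub>m n n) Um"
  let ?B = "four_block_mat (0\<^sub>m n n) (delta0 H L) (delta0 H L) (0\<^sub>m n n)"
  let ?Q = "four_block_mat (minv Up) (0\<^sub>m n n) (0\<^sub>m n n) (minv Um)"
  have P: "?P \<in> carrier_mat (n+n) (n+n)" using Up Um by simp
  have B: "?B \<in> carrier_mat (n+n) (n+n)" using d0 by simp
  have Q: "?Q \<in> carrier_mat (n+n) (n+n)" using mp mm by simp
  have bo: "boundary_op H L Up Um = ?P * ?B * ?Q" unfolding boundary_op_def Let_def n by simp
  have bc: "boundary_op H L Up Um \<in> carrier_mat (n+n) (n+n)" unfolding bo
    using mult_carrier_mat[OF mult_carrier_mat[OF P B] Q] .
  from v bc show vc: "v \<in> carrier_vec (n+n)" unfolding mat_kernel_def by auto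
  have kv: "boundary_op H L Up Um *\<^sub>v v = 0\<^sub>v (n+n)" using v bc unfolding mat_kernel_def by auto
  define x where "x = vec_first v n"
  define y where "y = vec_last v n"
  have xc: "x \<in> carrier_vec n" and yc: "y \<in> carrier_vec n" unfolding x_def y_def by auto
  have vxy: "v = x @\<^sub>v y" unfolding x_def y_def using vc by simp
  have q: "?Q *\<^sub>v v = (minv Up *\<^sub>v x) @\<^sub>v (minv Um *\<^sub>v y)"
    unfolding vxy by (rule mult_mat_vec_split) (use mp mm xc yc in auto)
  have mxc: "minv Up *\<^sub>v x \<in> carrier_vec n" "minv Um *\<^sub>v y \<in> carrier_vec n" using mp mm xc yc by auto
  have b: "?B *\<^sub>v (?Q *\<^sub>v v) = (delta0 H L *\<^sub>v (minv Um *\<^sub>v y)) @\<^sub>v (delta0 H L *\<^sub>v (minv Up *\<^sub>v x))"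
    unfolding q using four_block_mat_mult_vec[OF _ d0 d0 _ mxc(1) mxc(2), of "0\<^sub>m n n" "0\<^sub>m n n"] mxc d0
    using mult_mat_vec_carrier[OF d0 mxc(1)] mult_mat_vec_carrier[OF d0 mxc(2)] by simp
  have p: "?P *\<^sub>v (?B *\<^sub>v (?Q *\<^sub>v v)) = (Up *\<^sub>v (delta0 H L *\<^sub>v (minv Um *\<^sub>v y))) @\<^sub>v (Um *\<^sub>v (delta0 H L *\<^sub>v (minv Up *\<^sub>v x)))"
    unfolding b by (rule mult_mat_vec_split) (use Up Um d0 mxc mult_mat_vec_carrier[OF d0 mxc(1)] mult_mat_vec_carrier[OF d0 mxc(2)] in auto)
  have "boundary_op H L Up Um *\<^sub>v v = ?P *\<^sub>v (?B *\<^sub>v (?Q *\<^sub>v v))"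
    unfolding bo using P B Q vc by (simp add: assoc_mult_mat_vec[of _ "n+n" "n+n" _ "n+n"])
  then have "(Up *\<^sub>v (delta0 H L *\<^sub>v (minv Um *\<^sub>v y))) @\<^sub>v (Um *\<^sub>v (delta0 H L *\<^sub>v (minv Up *\<^sub>v x))) = 0\<^sub>v n @\<^sub>v 0\<^sub>v n"
    using kv p by (simp add: zero_append)
  moreover have "Up *\<^sub>v (delta0 H L *\<^sub>v (minv Um *\<^sub>v y)) \<in> carrier_vec n"
    using Up mult_mat_vec_carrier[OF d0 mxc(2)] by simp
  ultimately have e12: "Up *\<^sub>v (delta0 H L *\<^sub>v (minv Um *\<^sub>v y)) = 0\<^sub>v n \<and> Um *\<^sub>v (delta0 H L *\<^sub>v (minv Up *\<^sub>v x)) = 0\<^sub>v n"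
    using append_vec_eq by (metis zero_carrier_vec)
  then have e1: "Up *\<^sub>v (delta0 H L *\<^sub>v (minv Um *\<^sub>v y)) = 0\<^sub>v n" and e2: "Um *\<^sub>v (delta0 H L *\<^sub>v (minv Up *\<^sub>v x)) = 0\<^sub>v n"
    by auto
  show "delta0 H L *\<^sub>v (minv Up *\<^sub>v vec_first v n) = 0\<^sub>v n"
    using inv_cancel_vec[OF Um mult_mat_vec_carrier[OF d0 mxc(1)] e2] unfolding x_def .
  show "delta0 H L *\<^sub>v (minv Um *\<^sub>v vec_last v n) = 0\<^sub>v n"
    using inv_cancel_vec[OF Up mult_mat_vec_carrier[OF d0 mxc(2)] e1] unfolding y_def .
qed

lemma delta0_kernel_zero:
  fixes z :: "'a::field vec"
  assumes z: "z \<in> carrier_vec (H+2*L)" and k: "delta0 H L *\<^sub>v z = 0\<^sub>v (H+2*L)"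
    and i: "H + L \<le> i" "i < H+2*L"
  shows "z $ i = 0"
proof -
  have "(delta0 H L *\<^sub>v z) $ (i - L) = row (delta0 H L) (i - L) \<bullet> z"
    using i by (simp add: delta0_def)
  also have "row (delta0 H L) (i - L) = vec (H+2*L) (\<lambda>j. if j = i then 1 else 0)"
    using i unfolding delta0_def by (intro eq_vecI) auto
  also have "vec (H+2*L) (\<lambda>j. if j = i then 1 else 0) \<bullet> z = (\<Sum>j = 0..<H+2*L. (if j = i then 1 else 0) * z $ j)"
    using i z unfolding scalar_prod_def by (auto intro!: sum.cong)
  also have "\<dots> = (\<Sum>j = 0..<H+2*L. (if j = i then z $ j else 0))"
    by (rule sum.cong) auto
  also have "\<dots> = z $ i" using i by simp
  finally show ?thesis using k i by simp
qed

lemma carrier_vec_image: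
  "carrier_vec n = (\<lambda>f. vec n f) ` ({0..<n} \<rightarrow>\<^sub>E (UNIV :: 'a set))"
proof
  show "carrier_vec n \<subseteq> (\<lambda>f. vec n f) ` ({0..<n} \<rightarrow>\<^sub>E (UNIV :: 'a set))"
  proof
    fix v :: "'a vec" assume v: "v \<in> carrier_vec n"
    have eq: "v = vec n (restrict (\<lambda>i. v $ i) {0..<n})" using v by (intro eq_vecI) auto
    have mem: "restrict (\<lambda>i. v $ i) {0..<n} \<in> {0..<n} \<rightarrow>\<^sub>E (UNIV :: 'a set)" by simp
    show "v \<in> (\<lambda>f. vec n f) ` ({0..<n} \<rightarrow>\<^sub>E (UNIV :: 'a set))" by (rule image_eqI[where f="\<lambda>f. vec n f", OF eq mem])
  qed
qed (use vec_carrier in blast)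

lemma card_carrier_vec:
  "finite (carrier_vec n :: 'a::finite vec set) \<and> card (carrier_vec n :: 'a vec set) = CARD('a) ^ n"
proof -
  have inj: "inj_on (\<lambda>f. vec n f) ({0..<n} \<rightarrow>\<^sub>E (UNIV :: 'a set))"
  proof (rule inj_onI)
    fix f g assume f: "f \<in> {0..<n} \<rightarrow>\<^sub>E (UNIV :: 'a set)" and g: "g \<in> {0..<n} \<rightarrow>\<^sub>E (UNIV :: 'a set)"
      and e: "vec n f = vec n g"
    show "f = g"
    proof
      fix i show "f i = g i"
      proof (cases "i < n")
        case True then show ?thesis using arg_cong[OF e, of "\<lambda>v. v $ i"] by simp
      next
        case False then show ?thesis using f g by (auto simp: PiE_def extensional_def)
      qed
    qed
  qed
  show ?thesis unfolding carrier_vec_image using inj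
    by (simp add: card_image card_funcsetE finite_PiE)
qed

lemma carrier_mat_image:
  "carrier_mat n n = (\<lambda>f. mat n n f) ` (({0..<n} \<times> {0..<n}) \<rightarrow>\<^sub>E (UNIV :: 'a set))"
proof
  show "carrier_mat n n \<subseteq> (\<lambda>f. mat n n f) ` (({0..<n} \<times> {0..<n}) \<rightarrow>\<^sub>E (UNIV :: 'a set))"
  proof
    fix W :: "'a mat" assume W: "W \<in> carrier_mat n n"
    have eq: "W = mat n n (restrict (\<lambda>p. W $$ p) ({0..<n} \<times> {0..<n}))" using W by (intro eq_matI) auto
    have mem: "restrict (\<lambda>p. W $$ p) ({0..<n} \<times> {0..<n}) \<in> ({0..<n} \<times> {0..<n}) \<rightarrow>\<^sub>E (UNIV :: 'a set)" by simp
    show "W \<in> (\<lambda>f. mat n n f) ` (({0..<n} \<times> {0..<n}) \<rightarrow>\<^sub>E (UNIV :: 'a set))"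
      by (rule image_eqI[where f="\<lambda>f. mat n n f", OF eq mem])
  qed
qed (use mat_carrier in blast)

lemma card_carrier_mat:
  "finite (carrier_mat n n :: 'a::finite mat set) \<and> card (carrier_mat n n :: 'a mat set) = CARD('a) ^ (n*n)"
proof -
  have inj: "inj_on (\<lambda>f. mat n n f) (({0..<n} \<times> {0..<n}) \<rightarrow>\<^sub>E (UNIV :: 'a set))"
  proof (rule inj_onI)
    fix f g assume f: "f \<in> ({0..<n} \<times> {0..<n}) \<rightarrow>\<^sub>E (UNIV :: 'a set)" and g: "g \<in> ({0..<n} \<times> {0..<n}) \<rightarrow>\<^sub>E (UNIV :: 'a set)"
      and e: "mat n n f = mat n n g"
    show "f = g"
    proof
      fix p show "f p = g p"
      proof (cases "p \<in> {0..<n} \<times> {0..<n}")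
        case True then show ?thesis using arg_cong[OF e, of "\<lambda>M. M $$ p"] by auto
      next
        case False then show ?thesis using PiE_arb[OF f False] PiE_arb[OF g False] by simp
      qed
    qed
  qed
  have f: "finite (({0..<n} \<times> {0..<n}) \<rightarrow>\<^sub>E (UNIV :: 'a set))"
    by (intro finite_PiE) auto
  have c: "card (({0..<n} \<times> {0..<n}) \<rightarrow>\<^sub>E (UNIV :: 'a set)) = CARD('a) ^ (n*n)"
    by (subst card_funcsetE) (auto simp: card_cartesian_product)
  show ?thesis unfolding carrier_mat_image
    using card_image[OF inj] c finite_imageI[OF f] by simp
qed

lemma card_support_le:
  assumes S: "S \<subseteq> {0..<n}"
  shows "card {v \<in> carrier_vec n. \<forall>i<n. i \<notin> S \<longrightarrow> v $ i = (0::'a::{finite,zero})} \<le> CARD('a) ^ card S"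
proof -
  have fS: "finite S" using S finite_subset by blast
  have sub: "{v \<in> carrier_vec n. \<forall>i<n. i \<notin> S \<longrightarrow> v $ i = (0::'a)} \<subseteq>
     (\<lambda>f. vec n (\<lambda>i. if i \<in> S then f i else 0)) ` (S \<rightarrow>\<^sub>E (UNIV :: 'a set))"
  proof
    fix v assume v: "v \<in> {v \<in> carrier_vec n. \<forall>i<n. i \<notin> S \<longrightarrow> v $ i = (0::'a)}"
    have eq: "v = vec n (\<lambda>i. if i \<in> S then restrict (\<lambda>i. v $ i) S i else 0)" using v by (intro eq_vecI) auto
    have mem: "restrict (\<lambda>i. v $ i) S \<in> S \<rightarrow>\<^sub>E (UNIV :: 'a set)" by simp
    show "v \<in> (\<lambda>f. vec n (\<lambda>i. if i \<in> S then f i else 0)) ` (S \<rightarrow>\<^sub>E (UNIV :: 'a set))"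
      by (rule image_eqI[where f="\<lambda>f. vec n (\<lambda>i. if i \<in> S then f i else 0)", OF eq mem])
  qed
  then have "card {v \<in> carrier_vec n. \<forall>i<n. i \<notin> S \<longrightarrow> v $ i = (0::'a)} \<le> card (S \<rightarrow>\<^sub>E (UNIV :: 'a set))"
  proof -
    have fP: "finite (S \<rightarrow>\<^sub>E (UNIV :: 'a set))" using fS by (intro finite_PiE) auto
    show ?thesis
      by (rule order_trans[OF card_mono[OF finite_imageI[OF fP] sub] card_image_le[OF fP]])
  qed
  then show ?thesis using fS by (simp add: card_funcsetE)
qed

lemma fiber_le:
  fixes x :: "'a::{finite,field} vec"
  assumes x: "x \<in> carrier_vec n" "x \<noteq> 0\<^sub>v n" and T: "T \<subseteq> carrier_vec n"
  shows "card {W \<in> carrier_mat n n. W *\<^sub>v x \<in> T} \<le> CARD('a) ^ (n*(n-1)) * card T"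
proof -
  obtain i where i: "i < n" "x $ i \<noteq> 0"
    using x by (metis carrier_vecD eq_vecI index_zero_vec(1) index_zero_vec(2))
  define E where "E = {0..<n} \<times> ({0..<n} - {i})"
  have fE: "finite E" unfolding E_def by auto
  have cE: "card E = n * (n-1)" unfolding E_def using i by (simp add: card_cartesian_product)
  have fT: "finite T" using T card_carrier_vec[where 'a='a] finite_subset by blast
  define \<phi> where "\<phi> W = (restrict (\<lambda>p. W $$ p) E, W *\<^sub>v x)" for W :: "'a mat"
  let ?S = "{W \<in> carrier_mat n n. W *\<^sub>v x \<in> T}"
  have inj: "inj_on \<phi> ?S"
  proof (rule inj_onI)
    fix W W' assume W: "W \<in> ?S" and W': "W' \<in> ?S" and e: "\<phi> W = \<phi> W'"
    have rE: "\<And>p. p \<in> E \<Longrightarrow> W $$ p = W' $$ p"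
      using e unfolding \<phi>_def by (metis fst_conv restrict_apply')
    have m: "W *\<^sub>v x = W' *\<^sub>v x" using e unfolding \<phi>_def by simp
    have sumform: "(M *\<^sub>v x) $ r = M $$ (r,i) * x $ i + (\<Sum>k\<in>{0..<n} - {i}. M $$ (r,k) * x $ k)"
      if M: "M \<in> carrier_mat n n" and r: "r < n" for M r
    proof -
      have "(M *\<^sub>v x) $ r = (\<Sum>k\<in>{0..<n}. M $$ (r,k) * x $ k)"
        using M r x by (auto simp: scalar_prod_def intro!: sum.cong)
      also have "\<dots> = M $$ (r,i) * x $ i + (\<Sum>k\<in>{0..<n} - {i}. M $$ (r,k) * x $ k)"
        using i by (subst sum.remove[of _ i]) auto
      finally show ?thesis .
    qed
    show "W = W'"
    proof (rule eq_matI)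
      fix r j assume r: "r < dim_row W'" and j: "j < dim_col W'"
      have rn: "r < n" "j < n" using r j W' by auto
      show "W $$ (r,j) = W' $$ (r,j)"
      proof (cases "j = i")
        case False then show ?thesis using rE[of "(r,j)"] rn unfolding E_def by auto
      next
        case True
        have s: "(\<Sum>k\<in>{0..<n} - {i}. W $$ (r,k) * x $ k) = (\<Sum>k\<in>{0..<n} - {i}. W' $$ (r,k) * x $ k)"
          using rE unfolding E_def using rn by (intro sum.cong) auto
        have "W $$ (r,i) * x $ i = W' $$ (r,i) * x $ i"
          using sumform[of W r] sumform[of W' r] m s W W' rn by auto
        then show ?thesis using True i by simp
      qed
    qed (use W W' in auto)
  qed
  have sub: "\<phi> ` ?S \<subseteq> (E \<rightarrow>\<^sub>E (UNIV :: 'a set)) \<times> T" unfolding \<phi>_def by auto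
  have "card ?S = card (\<phi> ` ?S)" using inj by (simp add: card_image)
  also have "\<dots> \<le> card ((E \<rightarrow>\<^sub>E (UNIV :: 'a set)) \<times> T)"
    using sub fE fT by (intro card_mono) (auto intro!: finite_PiE)
  also have "\<dots> = CARD('a) ^ (n*(n-1)) * card T"
    using fE cE by (simp add: card_cartesian_product card_funcsetE)
  finally show ?thesis .
qed

lemma nonsing_invertible:
  fixes W :: "'a::field mat"
  assumes W: "W \<in> carrier_mat n n" and d: "det W \<noteq> 0"
  shows "invertible_mat W"
proof -
  have "W \<in> Units (ring_mat TYPE('a) n ())" by (rule det_non_zero_imp_unit[OF W d])
  then obtain B where B: "B \<in> carrier_mat n n" "B * W = 1\<^sub>m n" "W * B = 1\<^sub>m n"
    unfolding Units_def by (auto simp: ring_mat_simps)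
  show ?thesis unfolding invertible_mat_def inverts_mat_def
    using W B by (intro conjI exI[of _ B]) auto
qed

lemma GL_lower:
  assumes D3: "CARD('a::{finite,field}) \<ge> 3"
  shows "CARD('a) ^ (n*n) \<le> 2 * card {U \<in> carrier_mat n n. invertible_mat (U :: 'a mat)}"
proof -
  define D where "D = CARD('a)"
  let ?M = "carrier_mat n n :: 'a mat set"
  define G where "G = {U \<in> ?M. invertible_mat U}"
  define S where "S = ?M - G"
  have finM: "finite ?M" and cardM: "card ?M = D ^ (n*n)"
    using card_carrier_mat[where 'a='a, of n] unfolding D_def by auto
  have finV: "finite (carrier_vec n :: 'a vec set)" and cardV: "card (carrier_vec n :: 'a vec set) = D ^ n"
    using card_carrier_vec[where 'a='a, of n] unfolding D_def by auto
  have sing: "\<exists>v. v \<in> carrier_vec n \<and> v \<noteq> 0\<^sub>v n \<and> W *\<^sub>v v = 0\<^sub>v n" if W: "W \<in> S" for W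
  proof -
    have Wc: "W \<in> ?M" and ni: "\<not> invertible_mat W" using W unfolding S_def G_def by auto
    have "det W = 0" using nonsing_invertible[OF Wc] ni by blast
    then show ?thesis using det_0_iff_vec_prod_zero_field[OF Wc] by blast
  qed
  define kv where "kv W = (SOME v. v \<in> carrier_vec n \<and> v \<noteq> 0\<^sub>v n \<and> W *\<^sub>v v = 0\<^sub>v n)" for W :: "'a mat"
  have kv: "kv W \<in> carrier_vec n \<and> kv W \<noteq> 0\<^sub>v n \<and> W *\<^sub>v kv W = 0\<^sub>v n" if "W \<in> S" for W
    unfolding kv_def using someI_ex[OF sing[OF that]] .
  define V0 where "V0 = carrier_vec n - {0\<^sub>v n :: 'a vec}"
  have finV0: "finite V0" unfolding V0_def using finV by auto
  have cardV0: "card V0 = D ^ n - 1" unfolding V0_def using finV cardV by (simp add: card_Diff_singleton)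
  define P where "P = {(W,x). W \<in> ?M \<and> x \<in> V0 \<and> W *\<^sub>v x = 0\<^sub>v n}"
  have finP: "finite P"
    by (rule finite_subset[of _ "?M \<times> carrier_vec n"]) (use finM finV in \<open>auto simp: P_def V0_def\<close>)
  have P_sub: "P \<subseteq> (\<Union>x\<in>V0. (\<lambda>W. (W,x)) ` {W \<in> ?M. W *\<^sub>v x \<in> {0\<^sub>v n}})"
    unfolding P_def by auto
  have "card P \<le> (\<Sum>x\<in>V0. card ((\<lambda>W. (W,x)) ` {W \<in> ?M. W *\<^sub>v x \<in> {0\<^sub>v n}}))"
    by (rule order_trans[OF card_mono[OF _ P_sub] card_UN_le[OF finV0]])
       (use finV0 finM in auto)
  also have "\<dots> \<le> (\<Sum>x\<in>V0. D ^ (n*(n-1)))"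
  proof (rule sum_mono)
    fix x assume x: "x \<in> V0"
    have "card ((\<lambda>W. (W,x)) ` {W \<in> ?M. W *\<^sub>v x \<in> {0\<^sub>v n}}) \<le> card {W \<in> ?M. W *\<^sub>v x \<in> {0\<^sub>v n}}"
      by (rule card_image_le) (use finM in auto)
    also have "\<dots> \<le> CARD('a) ^ (n*(n-1)) * card {0\<^sub>v n :: 'a vec}"
      by (rule fiber_le) (use x in \<open>auto simp: V0_def\<close>)
    finally show "card ((\<lambda>W. (W,x)) ` {W \<in> ?M. W *\<^sub>v x \<in> {0\<^sub>v n}}) \<le> D ^ (n*(n-1))"
      unfolding D_def by simp
  qed
  also have "\<dots> = (D ^ n - 1) * D ^ (n*(n-1))" using cardV0 by simp
  also have "\<dots> \<le> D ^ n * D ^ (n*(n-1))" by simp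
  also have "\<dots> = D ^ (n*n)"
    by (simp add: power_add[symmetric]) (cases n; simp add: algebra_simps)
  finally have Pbound: "card P \<le> D ^ (n*n)" .
  define Q where "Q = Sigma S (\<lambda>W. (\<lambda>a. a \<cdot>\<^sub>v kv W) ` (UNIV - {0}))"
  have finS: "finite S" unfolding S_def using finM by auto
  have QP: "Q \<subseteq> P"
  proof
    fix q assume "q \<in> Q"
    then obtain W a where q: "q = (W, a \<cdot>\<^sub>v kv W)" and W: "W \<in> S" and a: "a \<noteq> 0"
      unfolding Q_def by auto
    note k = kv[OF W]
    have Wc: "W \<in> ?M" using W unfolding S_def by auto
    obtain j where j: "j < n" "kv W $ j \<noteq> 0"
      using k by (metis carrier_vecD eq_vecI index_zero_vec(1) index_zero_vec(2))
    have nz: "a \<cdot>\<^sub>v kv W \<noteq> 0\<^sub>v n"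
    proof
      assume "a \<cdot>\<^sub>v kv W = 0\<^sub>v n"
      then have "(a \<cdot>\<^sub>v kv W) $ j = 0" using j by simp
      moreover have "dim_vec (kv W) = n" using k by auto
      ultimately show False using j a k by simp
    qed
    have "W *\<^sub>v (a \<cdot>\<^sub>v kv W) = a \<cdot>\<^sub>v (W *\<^sub>v kv W)" using mult_mat_vec[OF Wc] k by blast
    also have "\<dots> = 0\<^sub>v n" using k by (intro eq_vecI) auto
    finally show "q \<in> P" unfolding P_def V0_def q using Wc nz k by auto
  qed
  have cardQ: "card Q = card S * (D - 1)"
  proof -
    have "card ((\<lambda>a. a \<cdot>\<^sub>v kv W) ` (UNIV - {0})) = D - 1" if W: "W \<in> S" for W
    proof -
      note k = kv[OF W]
      obtain j where j: "j < n" "kv W $ j \<noteq> 0"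
        using k by (metis carrier_vecD eq_vecI index_zero_vec(1) index_zero_vec(2))
      have "inj_on (\<lambda>a. a \<cdot>\<^sub>v kv W) (UNIV - {0})"
      proof (rule inj_onI)
        fix a b assume "a \<cdot>\<^sub>v kv W = b \<cdot>\<^sub>v kv W"
        then have "(a \<cdot>\<^sub>v kv W) $ j = (b \<cdot>\<^sub>v kv W) $ j" by simp
        moreover have "dim_vec (kv W) = n" using k by auto
        ultimately show "a = b" using j k by simp
      qed
      then show ?thesis unfolding D_def by (simp add: card_image card_Diff_singleton)
    qed
    then show ?thesis unfolding Q_def using finS by simp
  qed
  have "card S * (D - 1) \<le> D ^ (n*n)" using card_mono[OF finP QP] cardQ Pbound by simp
  moreover have "2 * card S \<le> card S * (D - 1)"
  proof -
    have "(2::nat) \<le> D - 1" using D3 unfolding D_def by linarith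
    from mult_le_mono1[OF this, of "card S"] show ?thesis by (simp add: mult.commute)
  qed
  moreover have "card ?M = card G + card S"
  proof -
    have "G \<subseteq> ?M" unfolding G_def by auto
    moreover have "card G \<le> card ?M" using card_mono[OF finM] calculation by blast
    ultimately show ?thesis unfolding S_def using finM finite_subset[OF _ finM]
      by (simp add: card_Diff_subset)
  qed
  ultimately show ?thesis using cardM unfolding G_def D_def by linarith
qed

definition Low :: "nat \<Rightarrow> real \<Rightarrow> 'a::zero vec set" where
  "Low n c = {x \<in> carrier_vec n. x \<noteq> 0\<^sub>v n \<and> real (weight x) < c * real n}"

lemma weight_first: "v \<in> carrier_vec (n+n) \<Longrightarrow> weight (vec_first v n) \<le> weight v"
  unfolding weight_def
  by (rule card_mono) (auto simp: vec_first_def)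

lemma weight_last: 
  assumes v: "v \<in> carrier_vec (n+n)"
  shows "weight (vec_last v n) \<le> weight v"
proof -
  have "{i. i < n \<and> vec_last v n $ i \<noteq> 0} = (\<lambda>i. i - n) ` ((+) n ` {i. i < n \<and> vec_last v n $ i \<noteq> 0})"
    by (auto simp: image_image)
  have "card {i. i < n \<and> vec_last v n $ i \<noteq> 0} = card ((+) n ` {i. i < n \<and> vec_last v n $ i \<noteq> 0})"
    by (rule card_image[symmetric]) auto
  also have "\<dots> \<le> card {i. i < dim_vec v \<and> v $ i \<noteq> 0}"
    by (rule card_mono) (use v in \<open>auto simp: vec_last_def\<close>)
  finally show ?thesis unfolding weight_def by simp
qed

lemma bad_bound:
  fixes c :: real
  assumes D3: "CARD('p::prime_card) \<ge> 3"
  shows "bad_prob TYPE('p) H L c \<le> 4 * real (card (Low (H+2*L) c :: 'p mod_ring vec set)) / real CARD('p) ^ L"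
proof -
  define n where "n = H + 2*L"
  define D where "D = CARD('p)"
  let ?GL = "GL n :: 'p mod_ring mat set"
  let ?Low = "Low n c :: 'p mod_ring vec set"
  define Kd where "Kd = {z \<in> carrier_vec n. delta0 H L *\<^sub>v z = (0\<^sub>v n :: 'p mod_ring vec)}"
  have finV: "finite (carrier_vec n :: 'p mod_ring vec set)"
    using card_carrier_vec by blast
  have finM: "finite (carrier_mat n n :: 'p mod_ring mat set)"
    using card_carrier_mat by blast
  have finGL: "finite ?GL" unfolding GL_def using finM by auto
  have finLow: "finite ?Low" unfolding Low_def using finV by auto
  have GLeq: "?GL = {U \<in> carrier_mat n n. invertible_mat U}" unfolding GL_def by simp
  have GLlow: "D ^ (n*n) \<le> 2 * card ?GL"
    unfolding GLeq D_def using GL_lower[where 'a="'p mod_ring", of n] D3 by simp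
  have cardKd: "card Kd \<le> D ^ (H+L)"
  proof -
    have "Kd \<subseteq> {v \<in> carrier_vec n. \<forall>i<n. i \<notin> {0..<H+L} \<longrightarrow> v $ i = (0::'p mod_ring)}"
      unfolding Kd_def n_def using delta0_kernel_zero by fastforce
    then have "card Kd \<le> card {v \<in> carrier_vec n. \<forall>i<n. i \<notin> {0..<H+L} \<longrightarrow> v $ i = (0::'p mod_ring)}"
      by (rule card_mono[rotated]) (use finV in auto)
    also have "\<dots> \<le> CARD('p mod_ring) ^ card {0..<H+L}"
      by (rule card_support_le) (auto simp: n_def)
    finally show ?thesis unfolding D_def by simp
  qed
  define A where "A = {U \<in> ?GL. \<exists>x\<in>?Low. minv U *\<^sub>v x \<in> Kd}"
  have fiber: "card {U \<in> ?GL. minv U *\<^sub>v x \<in> Kd} \<le> D ^ (n*(n-1)) * D ^ (H+L)" if x: "x \<in> ?Low" for x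
  proof -
    have inj: "inj_on minv ?GL" by (metis inj_onI minv_GL(2))
    have "card {U \<in> ?GL. minv U *\<^sub>v x \<in> Kd} = card (minv ` {U \<in> ?GL. minv U *\<^sub>v x \<in> Kd})"
      by (rule card_image[symmetric]) (rule inj_on_subset[OF inj], auto)
    also have "\<dots> \<le> card {W \<in> carrier_mat n n. W *\<^sub>v x \<in> Kd}"
      by (rule card_mono) (use finM minv_GL(1) in \<open>auto simp: GL_def\<close>)
    also have "\<dots> \<le> CARD('p mod_ring) ^ (n*(n-1)) * card Kd"
      by (rule fiber_le) (use x in \<open>auto simp: Low_def Kd_def\<close>)
    also have "\<dots> \<le> D ^ (n*(n-1)) * D ^ (H+L)" using cardKd unfolding D_def by simp
    finally show ?thesis .
  qed
  have cardA: "card A \<le> card ?Low * (D ^ (n*(n-1)) * D ^ (H+L))"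
  proof -
    have "A \<subseteq> (\<Union>x\<in>?Low. {U \<in> ?GL. minv U *\<^sub>v x \<in> Kd})" unfolding A_def by auto
    then have "card A \<le> card (\<Union>x\<in>?Low. {U \<in> ?GL. minv U *\<^sub>v x \<in> Kd})"
      by (rule card_mono[rotated]) (use finLow finGL in auto)
    also have "\<dots> \<le> (\<Sum>x\<in>?Low. card {U \<in> ?GL. minv U *\<^sub>v x \<in> Kd})"
      by (rule card_UN_le[OF finLow])
    also have "\<dots> \<le> (\<Sum>x\<in>?Low. D ^ (n*(n-1)) * D ^ (H+L))"
      by (rule sum_mono) (rule fiber)
    finally show ?thesis by simp
  qed
  define B where "B = {(Up, Um). Up \<in> ?GL \<and> Um \<in> ?GL \<and>
         (\<exists>v \<in> mat_kernel (boundary_op H L Up Um).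
             v \<noteq> 0\<^sub>v (2*n) \<and> real (weight v) < c * real n)}"
  have BAB: "B \<subseteq> A \<times> ?GL \<union> ?GL \<times> A"
  proof
    fix q assume "q \<in> B"
    then obtain Up Um v where q: "q = (Up, Um)" and Up: "Up \<in> ?GL" and Um: "Um \<in> ?GL"
      and v: "v \<in> mat_kernel (boundary_op H L Up Um)" and v0: "v \<noteq> 0\<^sub>v (2*n)"
      and w: "real (weight v) < c * real n"
      unfolding B_def by auto
    have Upc: "Up \<in> carrier_mat n n" "invertible_mat Up" and Umc: "Um \<in> carrier_mat n n" "invertible_mat Um"
      using Up Um unfolding GL_def by auto
    note ks = kernel_split[OF n_def Upc Umc v]
    define x where "x = vec_first v n"
    define y where "y = vec_last v n"
    have vxy: "v = x @\<^sub>v y" unfolding x_def y_def using ks(1) by simp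
    have wx: "real (weight x) < c * real n" using weight_first[OF ks(1)] w unfolding x_def by linarith
    have wy: "real (weight y) < c * real n" using weight_last[OF ks(1)] w unfolding y_def by linarith
    show "q \<in> A \<times> ?GL \<union> ?GL \<times> A"
    proof (cases "x = 0\<^sub>v n")
      case False
      then have "x \<in> ?Low" using wx unfolding Low_def x_def by auto
      moreover have "minv Up *\<^sub>v x \<in> Kd" unfolding Kd_def x_def using ks(2) minv_props[OF Upc] by auto
      ultimately have "Up \<in> A" unfolding A_def using Up by auto
      then show ?thesis using q Um by auto
    next
      case True
      have "y \<noteq> 0\<^sub>v n"
      proof
        assume "y = 0\<^sub>v n"
        then have "v = 0\<^sub>v (n+n)" using vxy True zero_append by metis
        then show False using v0 by (simp add: mult_2)
      qed
      then have "y \<in> ?Low" using wy unfolding Low_def y_def by auto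
      moreover have "minv Um *\<^sub>v y \<in> Kd" unfolding Kd_def y_def using ks(3) minv_props[OF Umc] by auto
      ultimately have "Um \<in> A" unfolding A_def using Um by auto
      then show ?thesis using q Up by auto
    qed
  qed
  have finA: "finite A" unfolding A_def using finGL by auto
  have cardB: "card B \<le> 2 * (card A * card ?GL)"
  proof -
    have "card B \<le> card (A \<times> ?GL \<union> ?GL \<times> A)"
      by (rule card_mono[OF _ BAB]) (use finA finGL in auto)
    also have "\<dots> \<le> card (A \<times> ?GL) + card (?GL \<times> A)" by (rule card_Un_le)
    also have "card (A \<times> ?GL) + card (?GL \<times> A) = 2 * (card A * card ?GL)"
      by (simp add: card_cartesian_product)
    finally show ?thesis .
  qed
  have GLpos: "card ?GL > 0"
  proof -
    have "D > 0" unfolding D_def by simp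
    then show ?thesis using GLlow by (metis gr0I mult_0_right not_le zero_less_power)
  qed
  have pow: "D ^ (n*(n-1)) * D ^ (H+L) * D ^ L = D ^ (n*n)"
  proof -
    have "n*(n-1) + (H+L) + L = n*n" unfolding n_def by (cases "H+2*L") (auto simp: algebra_simps)
    then show ?thesis by (metis power_add)
  qed
  have "bad_prob TYPE('p) H L c = real (card B) / real (card ?GL) ^ 2"
    unfolding bad_prob_def B_def n_def Let_def by simp
  also have "\<dots> \<le> real (2 * (card A * card ?GL)) / real (card ?GL) ^ 2"
  proof (rule divide_right_mono)
    show "real (card B) \<le> real (2 * (card A * card ?GL))" using cardB by (simp only: of_nat_le_iff)
  qed simp
  also have "\<dots> = 2 * real (card A) / real (card ?GL)"
    using GLpos by (simp add: power2_eq_square)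
  also have "\<dots> \<le> 2 * real (card ?Low * (D ^ (n*(n-1)) * D ^ (H+L))) / real (card ?GL)"
  proof (rule divide_right_mono)
    have "real (card A) \<le> real (card ?Low * (D ^ (n*(n-1)) * D ^ (H+L)))" using cardA by (simp only: of_nat_le_iff)
    then show "2 * real (card A) \<le> 2 * real (card ?Low * (D ^ (n*(n-1)) * D ^ (H+L)))" by simp
  qed simp
  also have "\<dots> \<le> 2 * real (card ?Low * (D ^ (n*(n-1)) * D ^ (H+L))) / (real (D ^ (n*n)) / 2)"
  proof (rule divide_left_mono)
    show "real (D ^ (n*n)) / 2 \<le> real (card ?GL)" using GLlow by linarith
    show "0 < real (card ?GL) * (real (D ^ (n*n)) / 2)" using GLpos unfolding D_def by simp
  qed simp
  also have "\<dots> = 4 * real (card ?Low) / real D ^ L"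
  proof -
    define Pr where "Pr = real (D ^ (n*(n-1)) * D ^ (H+L))"
    define Q where "Q = real D ^ L"
    have e1: "real (card ?Low * (D ^ (n*(n-1)) * D ^ (H+L))) = real (card ?Low) * Pr"
      unfolding Pr_def by simp
    have e2: "real (D ^ (n*n)) = Pr * Q"
      unfolding Pr_def Q_def using pow by (metis of_nat_mult of_nat_power)
    have Qp: "Q > 0" unfolding Q_def D_def by simp
    have Pp: "Pr > 0" unfolding Pr_def D_def by simp
    have "2 * (real (card ?Low) * Pr) / (Pr * Q / 2) = 4 * real (card ?Low) / Q"
      using Qp Pp by (simp add: field_simps)
    then show ?thesis unfolding e1 e2 Q_def by simp
  qed
  finally show ?thesis unfolding n_def D_def .
qed

lemma sum_Pow_power:
  assumes "finite A"
  shows "(\<Sum>S\<in>Pow A. (c::real) ^ card S) = (1 + c) ^ card A"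
  using assms
proof (induction A rule: finite_induct)
  case empty then show ?case by simp
next
  case (insert a A)
  have disj: "Pow A \<inter> insert a ` Pow A = {}" using insert by auto
  have inj: "inj_on (insert a) (Pow A)"
  proof (rule inj_onI)
    fix X Y assume X: "X \<in> Pow A" and Y: "Y \<in> Pow A" and e: "insert a X = insert a Y"
    have "X = insert a X - {a}" using X insert.hyps(2) by auto
    also have "\<dots> = insert a Y - {a}" using e by simp
    also have "\<dots> = Y" using Y insert.hyps(2) by auto
    finally show "X = Y" .
  qed
  have fin: "finite (Pow A)" using insert by simp
  have "(\<Sum>S\<in>Pow (insert a A). c ^ card S) = (\<Sum>S\<in>Pow A. c ^ card S) + (\<Sum>S\<in>insert a ` Pow A. c ^ card S)"
    unfolding Pow_insert using disj fin by (intro sum.union_disjoint) auto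
  also have "(\<Sum>S\<in>insert a ` Pow A. c ^ card S) = (\<Sum>S\<in>Pow A. c ^ card (insert a S))"
    by (rule sum.reindex[OF inj, unfolded comp_def])
  also have "\<dots> = (\<Sum>S\<in>Pow A. c * c ^ card S)"
  proof (rule sum.cong)
    fix S assume "S \<in> Pow A"
    then have "finite S" "a \<notin> S" using insert finite_subset by auto
    then show "c ^ card (insert a S) = c * c ^ card S" by simp
  qed simp
  also have "\<dots> = c * (1+c) ^ card A" using insert.IH by (simp add: sum_distrib_left[symmetric])
  finally show ?case using insert by (simp add: algebra_simps)
qed

lemma powr_ge_one_neg:
  assumes "0 < (c::real)" "c \<le> 1" "a \<le> 0"
  shows "1 \<le> c powr a"
proof -
  have "ln c \<le> 0" using assms by simp
  then have "0 \<le> a * ln c" using assms by (simp add: mult_nonpos_nonpos)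
  then show ?thesis using assms by (simp add: powr_def)
qed

lemma Low_bound:
  assumes c: "0 < c" "c \<le> 1"
  shows "real (card (Low n c :: 'a::{finite,zero} vec set))
           \<le> real CARD('a) powr (c * real n) * c powr (- (c * real n)) * (1 + c) ^ n"
proof -
  define D where "D = real CARD('a)"
  have D1: "1 \<le> D" unfolding D_def by simp
  define Sset where "Sset = {S \<in> Pow {0..<n}. real (card S) < c * real n}"
  define Vs where "Vs S = {v \<in> carrier_vec n. \<forall>i<n. i \<notin> S \<longrightarrow> v $ i = (0::'a)}" for S
  have finS: "finite Sset" unfolding Sset_def by auto
  have finV: "finite (carrier_vec n :: 'a vec set)" using card_carrier_vec by blast
  have sub: "(Low n c :: 'a vec set) \<subseteq> (\<Union>S\<in>Sset. Vs S)"
  proof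
    fix x :: "'a vec" assume x: "x \<in> Low n c"
    define S where "S = {i. i < n \<and> x $ i \<noteq> 0}"
    have xc: "x \<in> carrier_vec n" using x unfolding Low_def by auto
    have "weight x = card S" unfolding weight_def S_def using xc by auto
    then have "S \<in> Sset" using x unfolding Sset_def Low_def S_def by auto
    moreover have "x \<in> Vs S" unfolding Vs_def S_def using xc by auto
    ultimately show "x \<in> (\<Union>S\<in>Sset. Vs S)" by blast
  qed
  have "card (Low n c :: 'a vec set) \<le> card (\<Union>S\<in>Sset. Vs S)"
    by (rule card_mono[OF _ sub]) (use finS finV in \<open>auto simp: Vs_def\<close>)
  also have "\<dots> \<le> (\<Sum>S\<in>Sset. card (Vs S))" by (rule card_UN_le[OF finS])
  also have "\<dots> \<le> (\<Sum>S\<in>Sset. CARD('a) ^ card S)"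
    by (rule sum_mono) (unfold Vs_def, rule card_support_le, auto simp: Sset_def)
  finally have "real (card (Low n c :: 'a vec set)) \<le> real (\<Sum>S\<in>Sset. CARD('a) ^ card S)"
    by (simp only: of_nat_le_iff)
  also have "real (\<Sum>S\<in>Sset. CARD('a) ^ card S) = (\<Sum>S\<in>Sset. D ^ card S)"
    unfolding D_def by simp
  also have "\<dots> \<le> (\<Sum>S\<in>Sset. D powr (c * real n))"
  proof (rule sum_mono)
    fix S assume "S \<in> Sset"
    then have "real (card S) \<le> c * real n" unfolding Sset_def by auto
    then have "D powr real (card S) \<le> D powr (c * real n)" using D1 by (intro powr_mono) auto
    then show "D ^ card S \<le> D powr (c * real n)" using D1 by (simp add: powr_realpow)
  qed
  also have "\<dots> = D powr (c * real n) * real (card Sset)" by simp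
  also have "real (card Sset) \<le> c powr (- (c * real n)) * (1 + c) ^ n"
  proof -
    have "real (card Sset) = (\<Sum>S\<in>Sset. 1)" by simp
    also have "\<dots> \<le> (\<Sum>S\<in>Sset. c powr (real (card S) - c * real n))"
      by (rule sum_mono) (rule powr_ge_one_neg, use c in \<open>auto simp: Sset_def\<close>)
    also have "\<dots> \<le> (\<Sum>S\<in>Pow {0..<n}. c powr (real (card S) - c * real n))"
      by (rule sum_mono2) (auto simp: Sset_def)
    also have "\<dots> = (\<Sum>S\<in>Pow {0..<n}. c powr (- (c * real n)) * c ^ card S)"
    proof (rule sum.cong)
      fix S :: "nat set"
      have "c powr (real (card S) - c * real n) = c powr (real (card S)) * c powr (- (c * real n))"
        by (subst powr_add[symmetric]) simp
      then show "c powr (real (card S) - c * real n) = c powr (- (c * real n)) * c ^ card S"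
        using c by (simp add: powr_realpow)
    qed simp
    also have "\<dots> = c powr (- (c * real n)) * (1 + c) ^ n"
      by (simp add: sum_distrib_left[symmetric] sum_Pow_power)
    finally show ?thesis .
  qed
  then have "D powr (c * real n) * real (card Sset) \<le> D powr (c * real n) * (c powr (- (c * real n)) * (1 + c) ^ n)"
    by (intro mult_left_mono) auto
  finally show ?thesis unfolding D_def by (simp add: mult.assoc)
qed

lemma small_c:
  fixes D t :: real
  assumes "t > 0"
  shows "\<exists>c. 0 < c \<and> c < 1 \<and> c * (ln D + 1 - ln c) < t"
proof -
  have lim: "((\<lambda>c::real. c * (ln D + 1 - ln c)) \<longlongrightarrow> 0) (at_right 0)" by real_asymp
  have e1: "\<forall>\<^sub>F c in at_right 0. c * (ln D + 1 - ln c) < t"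
    using order_tendstoD(2)[OF lim assms] .
  have e2: "\<forall>\<^sub>F c in at_right (0::real). c < 1"
    unfolding eventually_at_right_field by (intro exI[of _ 1]) auto
  obtain b where b: "b > 0" "\<And>y. y > 0 \<Longrightarrow> y < b \<Longrightarrow> y * (ln D + 1 - ln y) < t \<and> y < 1"
    using eventually_conj[OF e1 e2] unfolding eventually_at_right_field by auto
  show ?thesis using b(2)[of "b/2"] b(1) by (intro exI[of _ "b/2"]) auto
qed


theorem lemma1:
  fixes \<epsilon> :: real
  assumes "CARD('p::prime_card) \<noteq> 2"
    and "\<epsilon> > 0"
  shows "\<exists>c > 0. \<exists>\<rho> > 0. \<exists>C :: real. \<exists>N :: nat. \<forall>H L :: nat.
           H + 2*L \<ge> N \<and> real H \<le> \<rho> * real (H + 2*L) \<longrightarrow>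
           bad_prob TYPE('p) H L c
             \<le> C * real CARD('p) powr ((-1/2 + \<epsilon>) * real (H + 2*L))"
proof -
  define D where "D = real CARD('p)"
  have pr: "prime CARD('p)" by (rule prime_card)
  have D3: "CARD('p) \<ge> 3" using prime_ge_2_nat[OF pr] assms(1) by linarith
  have Dge: "D \<ge> 3" unfolding D_def using D3 by simp
  have lD: "ln D > 0" using Dge by simp
  define t where "t = \<epsilon> * ln D / 2"
  have tpos: "t > 0" unfolding t_def using lD assms(2) by simp
  obtain c where c: "0 < c" "c < 1" "c * (ln D + 1 - ln c) < t" using small_c[OF tpos] by blast
  have main: "bad_prob TYPE('p) H L c \<le> 4 * real CARD('p) powr ((-1/2 + \<epsilon>) * real (H + 2*L))"
    if hH: "real H \<le> \<epsilon> * real (H + 2*L)" for H L :: nat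
  proof -
    define n where "n = H + 2*L"
    have bb: "bad_prob TYPE('p) H L c \<le> 4 * real (card (Low n c :: 'p mod_ring vec set)) / D ^ L"
      using bad_bound[OF D3, of H L c] unfolding n_def D_def .
    have lb: "real (card (Low n c :: 'p mod_ring vec set))
           \<le> D powr (c * real n) * c powr (- (c * real n)) * (1 + c) ^ n"
      using Low_bound[where 'a="'p mod_ring", OF c(1) less_imp_le[OF c(2)], of n] unfolding D_def by simp
    have e1: "D powr (c * real n) = exp (c * real n * ln D)" using Dge by (simp add: powr_def)
    have e2: "c powr (- (c * real n)) = exp (- (c * real n) * ln c)" using c by (simp add: powr_def)
    have e3: "(1 + c) ^ n \<le> exp (real n * c)"
    proof -
      have "(1 + c) ^ n \<le> exp c ^ n" using c by (intro power_mono) auto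
      then show ?thesis by (simp add: exp_of_nat_mult)
    qed
    have "real (card (Low n c :: 'p mod_ring vec set)) \<le> exp (c * real n * ln D) * exp (- (c * real n) * ln c) * exp (real n * c)"
      using lb e1 e2 e3 by (smt (verit) exp_gt_zero mult_left_mono mult_pos_pos)
    also have "\<dots> = exp (real n * (c * (ln D + 1 - ln c)))" by (simp add: exp_add[symmetric] algebra_simps)
    also have "\<dots> \<le> exp (real n * t)"
    proof -
      have "real n * (c * (ln D + 1 - ln c)) \<le> real n * t" using c(3) by (intro mult_left_mono) auto
      then show ?thesis by simp
    qed
    finally have lowb: "real (card (Low n c :: 'p mod_ring vec set)) \<le> exp (real n * t)" .
    have DL: "D ^ L = exp (real L * ln D)"
      using Dge by (simp add: powr_realpow[symmetric] powr_def)
    have "bad_prob TYPE('p) H L c \<le> 4 * exp (real n * t) / exp (real L * ln D)"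
    proof -
      have "4 * real (card (Low n c :: 'p mod_ring vec set)) / exp (real L * ln D) \<le> 4 * exp (real n * t) / exp (real L * ln D)"
        using lowb by (intro divide_right_mono mult_left_mono) auto
      then show ?thesis using bb unfolding DL by linarith
    qed
    also have "\<dots> = 4 * exp (real n * t - real L * ln D)" by (simp add: exp_diff)
    also have "\<dots> \<le> 4 * exp ((-1/2 + \<epsilon>) * real n * ln D)"
    proof -
      have "real L \<ge> (real n - \<epsilon> * real n) / 2" using hH unfolding n_def by simp
      then have "real L * ln D \<ge> (real n - \<epsilon> * real n) / 2 * ln D" using lD by (intro mult_right_mono) auto
      then have "real n * t - real L * ln D \<le> (-1/2 + \<epsilon>) * real n * ln D"
        unfolding t_def by (simp add: algebra_simps)
      then show ?thesis by simp
    qed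
    also have "\<dots> = 4 * D powr ((-1/2 + \<epsilon>) * real n)" using Dge by (simp add: powr_def)
    finally show ?thesis unfolding D_def n_def .
  qed
  show ?thesis
    apply (rule exI[of _ c])
    apply (rule conjI[OF c(1)])
    apply (rule exI[of _ \<epsilon>])
    apply (rule conjI[OF assms(2)])
    apply (rule exI[of _ 4])
    apply (rule exI[of _ 0])
    using main by blast
qed

end
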